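(* Consider a weighted stochastic block model on vertex set $A\cup B$, where $A$ and $B$ are the two true communities, each of size $n$, and each pair $(i,j)$ receives an observed weight $w_{ij}$, drawn from $p_n$ if $i,j$ are in the same community and from $q_n$ otherwise. Let $d_n(x)=\log\frac{p_n(x)}{q_n(x)}$, and for disjoint vertex sets $\hat A,\hat B$ let $\mathcal S(\hat A,\hat B)=\sum_{i\in\hat A,\,j\in\hat B}d_n(w_{ij})$. If the maximum likelihood estimator of the community assignment does not coincide with the truth, then there exist an integer $1\le k\le\frac n2$ and sets $A_w\subset A$, $B_w\subset B$ with $|A_w|=|B_w|=k$ such that \[ \mathcal S(A_w,\bar A_w)+\mathcal S(B_w,\bar B_w)\le \mathcal S(A_w,\bar B_w)+\mathcal S(\bar A_w,B_w), \] where $\bar A_w=A\setminus A_w$ and $\bar B_w=B\setminus B_w$.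
   Context: $p_n$ and $q_n$ are mutually absolutely continuous (so that $d_n$ is well defined); they may be densities of continuous distributions or probability mass functions. *)

theory Defs
  imports Complex_Main
begin

text \<open>Unordered vertex pairs of V (each pair {i,j}, i \<noteq> j, receives one observed weight w {i,j}).\<close>
definition vpairs :: "'v set \<Rightarrow> 'v set set" where
  "vpairs V = {{i, j} | i j. i \<in> V \<and> j \<in> V \<and> i \<noteq> j}"

definition llr :: "('x \<Rightarrow> real) \<Rightarrow> ('x \<Rightarrow> real) \<Rightarrow> 'x \<Rightarrow> real" where
  "llr p q x = ln (p x / q x)"

definition Sscore :: "('x \<Rightarrow> real) \<Rightarrow> ('x \<Rightarrow> real) \<Rightarrow> ('v set \<Rightarrow> 'x) \<Rightarrow> 'v set \<Rightarrow> 'v set \<Rightarrow> real" where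
  "Sscore p q w Ah Bh = (\<Sum>i\<in>Ah. \<Sum>j\<in>Bh. llr p q (w {i, j}))"

definition balanced_partition :: "'v set \<Rightarrow> nat \<Rightarrow> 'v set \<Rightarrow> 'v set \<Rightarrow> bool" where
  "balanced_partition V n A' B' \<longleftrightarrow>
     A' \<inter> B' = {} \<and> A' \<union> B' = V \<and> card A' = n \<and> card B' = n"

definition likelihood :: "('x \<Rightarrow> real) \<Rightarrow> ('x \<Rightarrow> real) \<Rightarrow> ('v set \<Rightarrow> 'x) \<Rightarrow> 'v set \<Rightarrow> 'v set \<Rightarrow> real" where
  "likelihood p q w A' B' =
     (\<Prod>e\<in>vpairs (A' \<union> B'). (if e \<subseteq> A' \<or> e \<subseteq> B' then p (w e) else q (w e)))"

definition is_mle :: "('x \<Rightarrow> real) \<Rightarrow> ('x \<Rightarrow> real) \<Rightarrow> ('v set \<Rightarrow> 'x) \<Rightarrow> 'v set \<Rightarrow> nat \<Rightarrow> 'v set \<Rightarrow> 'v set \<Rightarrow> bool" where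
  "is_mle p q w V n A' B' \<longleftrightarrow>
     balanced_partition V n A' B' \<and>
     (\<forall>A'' B''. balanced_partition V n A'' B'' \<longrightarrow> likelihood p q w A'' B'' \<le> likelihood p q w A' B')"

end

theory Submission
  imports Defs
begin

definition Tsc where "Tsc p q w X = (\<Sum>i\<in>X. \<Sum>j\<in>X-{i}. llr p q (w{i,j}))"

lemma pairs_sum:
  fixes h :: "'v set \<Rightarrow> real"
  assumes fin: "finite X"
  shows "(\<Sum>i\<in>X. \<Sum>j\<in>X-{i}. h {i,j}) = 2 * (\<Sum>e\<in>vpairs X. h e)"
proof -
  define P where "P = Sigma X (\<lambda>i. X - {i})"
  define f where "f = (\<lambda>(i::'v,j::'v). {i,j})"
  have finP: "finite P" using fin unfolding P_def by auto
  have "(\<Sum>i\<in>X. \<Sum>j\<in>X-{i}. h {i,j}) = (\<Sum>x\<in>P. h (f x))"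
    unfolding P_def f_def using fin by (simp add: sum.Sigma split_def)
  also have "\<dots> = (\<Sum>y\<in>f`P. \<Sum>x\<in>{x. x\<in>P \<and> f x = y}. h (f x))"
    by (rule sum.image_gen[OF finP])
  also have "\<dots> = (\<Sum>y\<in>f`P. 2 * h y)"
  proof (rule sum.cong[OF refl])
    fix y assume "y \<in> f ` P"
    then obtain i j where ij: "i \<in> X" "j \<in> X" "i \<noteq> j" "y = {i,j}"
      unfolding P_def f_def by auto
    have "{x. x\<in>P \<and> f x = y} = {(i,j),(j,i)}"
      using ij unfolding P_def f_def by (auto simp: doubleton_eq_iff)
    moreover have "(i,j) \<noteq> (j,i)" using ij by auto
    ultimately show "(\<Sum>x\<in>{x. x\<in>P \<and> f x = y}. h (f x)) = 2 * h y"
      using ij unfolding f_def by (simp add: insert_commute)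
  qed
  also have "f ` P = vpairs X"
    unfolding P_def f_def vpairs_def by auto
  finally show ?thesis by (simp add: sum_distrib_left)
qed

lemma T_split:
  assumes "finite X" "finite Z" "X \<inter> Z = {}"
  shows "Tsc p q w (X \<union> Z) = Tsc p q w X + Tsc p q w Z + 2 * Sscore p q w X Z"
proof -
  let ?h = "\<lambda>i j. llr p q (w{i,j})"
  have sw: "Sscore p q w Z X = Sscore p q w X Z"
    unfolding Sscore_def by (subst sum.swap) (simp add: insert_commute)
  have a: "\<And>i. i \<in> X \<Longrightarrow> (\<Sum>j\<in>(X \<union> Z)-{i}. ?h i j) = (\<Sum>j\<in>X-{i}. ?h i j) + (\<Sum>j\<in>Z. ?h i j)"
  proof -
    fix i assume "i \<in> X"
    then have e: "(X \<union> Z)-{i} = (X-{i}) \<union> Z" using assms by auto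
    show "(\<Sum>j\<in>(X \<union> Z)-{i}. ?h i j) = (\<Sum>j\<in>X-{i}. ?h i j) + (\<Sum>j\<in>Z. ?h i j)"
      using assms by (subst e, subst sum.union_disjoint) auto
  qed
  have b: "\<And>i. i \<in> Z \<Longrightarrow> (\<Sum>j\<in>(X \<union> Z)-{i}. ?h i j) = (\<Sum>j\<in>X. ?h i j) + (\<Sum>j\<in>Z-{i}. ?h i j)"
  proof -
    fix i assume "i \<in> Z"
    then have e: "(X \<union> Z)-{i} = X \<union> (Z-{i})" using assms by auto
    show "(\<Sum>j\<in>(X \<union> Z)-{i}. ?h i j) = (\<Sum>j\<in>X. ?h i j) + (\<Sum>j\<in>Z-{i}. ?h i j)"
      using assms by (subst e, subst sum.union_disjoint) auto
  qed
  have "Tsc p q w (X \<union> Z) = (\<Sum>i\<in>X. \<Sum>j\<in>(X \<union> Z)-{i}. ?h i j) + (\<Sum>i\<in>Z. \<Sum>j\<in>(X \<union> Z)-{i}. ?h i j)"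
    unfolding Tsc_def using assms by (simp add: sum.union_disjoint)
  also have "\<dots> = Tsc p q w X + Sscore p q w X Z + (Sscore p q w Z X + Tsc p q w Z)"
    unfolding Tsc_def Sscore_def
    by (simp add: a b sum.distrib cong: sum.cong)
  finally show ?thesis using sw by simp
qed

lemma finite_vpairs: "finite V \<Longrightarrow> finite (vpairs V)"
  by (rule finite_subset[of _ "Pow V"]) (auto simp: vpairs_def)

lemma loglik:
  assumes fin: "finite V" and XY: "X \<inter> Y = {}" "X \<union> Y = V"
    and pos: "\<forall>e\<in>vpairs V. p (w e) > 0 \<and> q (w e) > 0"
  shows "ln (likelihood p q w X Y) = (\<Sum>e\<in>vpairs V. ln (q (w e))) + (Tsc p q w X + Tsc p q w Y) / 2"
proof -
  let ?F = "\<lambda>e. if e \<subseteq> X \<or> e \<subseteq> Y then p (w e) else q (w e)"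
  let ?h = "\<lambda>e. llr p q (w e)"
  have fv: "finite (vpairs V)" using fin by (rule finite_vpairs)
  have finX: "finite X" "finite Y" using fin XY by auto
  have "ln (likelihood p q w X Y) = (\<Sum>e\<in>vpairs V. ln (?F e))"
    unfolding likelihood_def using XY pos fv by (subst ln_prod) auto
  also have "\<dots> = (\<Sum>e\<in>vpairs V. ln (q (w e)) + (if e \<subseteq> X \<or> e \<subseteq> Y then ?h e else 0))"
    using pos by (intro sum.cong) (auto simp: llr_def ln_div)
  also have "\<dots> = (\<Sum>e\<in>vpairs V. ln (q (w e))) + (\<Sum>e\<in>{e\<in>vpairs V. e \<subseteq> X \<or> e \<subseteq> Y}. ?h e)"
    using fv by (simp add: sum.distrib sum.inter_filter)
  also have "{e\<in>vpairs V. e \<subseteq> X \<or> e \<subseteq> Y} = vpairs X \<union> vpairs Y"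
    using XY unfolding vpairs_def by auto
  also have "(\<Sum>e\<in>vpairs X \<union> vpairs Y. ?h e) = (\<Sum>e\<in>vpairs X. ?h e) + (\<Sum>e\<in>vpairs Y. ?h e)"
    using finX XY by (intro sum.union_disjoint finite_vpairs) (auto simp: vpairs_def doubleton_eq_iff)
  also have "\<dots> = (Tsc p q w X + Tsc p q w Y) / 2"
    unfolding Tsc_def using pairs_sum[OF finX(1), of ?h] pairs_sum[OF finX(2), of ?h] by simp
  finally show ?thesis .
qed

lemma Sscore_sym: "finite X \<Longrightarrow> finite Z \<Longrightarrow> Sscore p q w Z X = Sscore p q w X Z"
  unfolding Sscore_def by (subst sum.swap) (simp add: insert_commute)

lemma lik_pos:
  assumes "\<forall>e\<in>vpairs (X \<union> Y). p (w e) > 0 \<and> q (w e) > 0"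
  shows "likelihood p q w X Y > 0"
  unfolding likelihood_def using assms by (intro prod_pos) auto

lemma core:
  assumes fA: "finite A" and fB: "finite B" and AB: "A \<inter> B = {}"
    and pos: "\<forall>e\<in>vpairs (A \<union> B). p (w e) > 0 \<and> q (w e) > 0"
    and A'B': "A' \<inter> B' = {}" "A' \<union> B' = A \<union> B"
    and le: "likelihood p q w A B \<le> likelihood p q w A' B'"
  shows "Sscore p q w (A \<inter> B') (A - (A \<inter> B')) + Sscore p q w (B \<inter> A') (B - (B \<inter> A'))
           \<le> Sscore p q w (A \<inter> B') (B - (B \<inter> A')) + Sscore p q w (A - (A \<inter> B')) (B \<inter> A')"
proof -
  define Aw where "Aw = A \<inter> B'"
  define Bw where "Bw = B \<inter> A'"
  have fin: "finite Aw" "finite Bw" "finite (A - Aw)" "finite (B - Bw)"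
    using fA fB unfolding Aw_def Bw_def by auto
  have eqA: "A = Aw \<union> (A - Aw)" and eqB: "B = Bw \<union> (B - Bw)"
    unfolding Aw_def Bw_def by auto
  have eqA': "A' = (A - Aw) \<union> Bw" and eqB': "B' = (B - Bw) \<union> Aw"
    using A'B' AB unfolding Aw_def Bw_def by auto
  have p1: "likelihood p q w A B > 0" using pos by (rule lik_pos)
  have p2: "likelihood p q w A' B' > 0" using pos A'B' by (intro lik_pos) simp
  have "ln (likelihood p q w A B) \<le> ln (likelihood p q w A' B')"
    using le p1 p2 by simp
  then have "Tsc p q w A + Tsc p q w B \<le> Tsc p q w A' + Tsc p q w B'"
    using loglik[of "A \<union> B" A B p w q] loglik[of "A \<union> B" A' B' p w q] fA fB AB A'B' pos
    by simp
  moreover have "Tsc p q w A = Tsc p q w Aw + Tsc p q w (A - Aw) + 2 * Sscore p q w Aw (A - Aw)"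
    using T_split[of Aw "A - Aw" p q w] fin eqA by auto
  moreover have "Tsc p q w B = Tsc p q w Bw + Tsc p q w (B - Bw) + 2 * Sscore p q w Bw (B - Bw)"
    using T_split[of Bw "B - Bw" p q w] fin eqB by auto
  moreover have "Tsc p q w A' = Tsc p q w (A - Aw) + Tsc p q w Bw + 2 * Sscore p q w (A - Aw) Bw"
    using T_split[of "A - Aw" Bw p q w] fin eqA' AB unfolding Bw_def by auto
  moreover have "Tsc p q w B' = Tsc p q w (B - Bw) + Tsc p q w Aw + 2 * Sscore p q w (B - Bw) Aw"
    using T_split[of "B - Bw" Aw p q w] fin eqB' AB unfolding Aw_def by auto
  moreover have "Sscore p q w (B - Bw) Aw = Sscore p q w Aw (B - Bw)"
    by (rule Sscore_sym) (use fin in auto)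
  ultimately show ?thesis unfolding Aw_def[symmetric] Bw_def[symmetric] by linarith
qed

lemma lik_sym: "likelihood p q w X Y = likelihood p q w Y X"
  unfolding likelihood_def by (simp add: Un_commute disj_commute)

theorem lemma1:
  fixes A B :: "'v set" and n :: nat
    and p q :: "'x \<Rightarrow> real" and w :: "'v set \<Rightarrow> 'x"
    and A' B' :: "'v set"
  assumes "finite A" and "finite B" and "A \<inter> B = {}"
    and "card A = n" and "card B = n"
    and "\<forall>e\<in>vpairs (A \<union> B). p (w e) > 0 \<and> q (w e) > 0"
    and "is_mle p q w (A \<union> B) n A' B'"
    and "{A', B'} \<noteq> {A, B}"
  shows "\<exists>k Aw Bw. 1 \<le> k \<and> 2 * k \<le> n \<and> Aw \<subseteq> A \<and> Bw \<subseteq> B \<and>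
           card Aw = k \<and> card Bw = k \<and>
           Sscore p q w Aw (A - Aw) + Sscore p q w Bw (B - Bw)
             \<le> Sscore p q w Aw (B - Bw) + Sscore p q w (A - Aw) Bw"
proof -
  note fA = assms(1) and fB = assms(2) and AB = assms(3) and cA = assms(4) and cB = assms(5)
    and pos = assms(6)
  have d: "A' \<inter> B' = {}" and u: "A' \<union> B' = A \<union> B" and cA': "card A' = n" and cB': "card B' = n"
    using assms(7) unfolding is_mle_def balanced_partition_def by auto
  have le: "likelihood p q w A B \<le> likelihood p q w A' B'"
    using assms(7) AB cA cB unfolding is_mle_def balanced_partition_def by auto
  have fA': "finite A'" "finite B'" using fA fB u by (metis finite_Un)+
  define k where "k = card (A \<inter> B')"
  have e1: "card (A \<inter> A') + k = n"
  proof -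
    have "A = (A \<inter> A') \<union> (A \<inter> B')" using u by auto
    then have "card A = card (A \<inter> A') + card (A \<inter> B')"
      using fA d by (metis card_Un_disjoint finite_Int Int_Un_distrib inf_bot_right inf_left_commute inf_commute)
    then show ?thesis using cA k_def by simp
  qed
  have e2: "card (A \<inter> A') + card (B \<inter> A') = n"
  proof -
    have "A' = (A \<inter> A') \<union> (B \<inter> A')" using u by auto
    moreover have "card ((A \<inter> A') \<union> (B \<inter> A')) = card (A \<inter> A') + card (B \<inter> A')"
      using fA fB AB by (intro card_Un_disjoint) auto
    ultimately show ?thesis using cA' by simp
  qed
  have e3: "card (B \<inter> B') + card (B \<inter> A') = n"
  proof -
    have "B = (B \<inter> B') \<union> (B \<inter> A')" using u by auto
    moreover have "card ((B \<inter> B') \<union> (B \<inter> A')) = card (B \<inter> B') + card (B \<inter> A')"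
      using fB d by (intro card_Un_disjoint) auto
    ultimately show ?thesis using cB by simp
  qed
  show ?thesis
  proof (cases "2 * k \<le> n")
    case True
    have "k \<noteq> 0"
    proof
      assume "k = 0"
      then have "A \<inter> B' = {}" using k_def fA by simp
      then have "A \<subseteq> A'" using u by auto
      then have "A = A'" using cA cA' fA' by (metis card_subset_eq)
      then have "B = B'" using u d AB by auto
      then show False using assms(8) \<open>A = A'\<close> by simp
    qed
    then show ?thesis
      using core[OF fA fB AB pos d u le] True e1 e2 k_def
      by (intro exI[of _ k] exI[of _ "A \<inter> B'"] exI[of _ "B \<inter> A'"]) auto
  next
    case False
    have "k \<noteq> n"
    proof
      assume "k = n"
      then have "A \<inter> A' = {}" using e1 fA by simp
      then have "A \<subseteq> B'" using u by auto
      then have "A = B'" using cA cB' fA' by (metis card_subset_eq)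
      then have "B = A'" using u d AB by auto
      then show False using assms(8) \<open>A = B'\<close> by (simp add: insert_commute)
    qed
    have le': "likelihood p q w A B \<le> likelihood p q w B' A'" using le lik_sym by metis
    have d': "B' \<inter> A' = {}" "B' \<union> A' = A \<union> B" using d u by auto
    show ?thesis
      using core[OF fA fB AB pos d'(1) d'(2) le'] False e1 e2 e3 \<open>k \<noteq> n\<close>
      by (intro exI[of _ "n - k"] exI[of _ "A \<inter> A'"] exI[of _ "B \<inter> B'"]) auto
  qed
qed

end
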